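(* Let $A \in \mathcal{M}_n(\mathbb{H})$ be nilpotent. If $W(A)$ is a (closed) disk $\mathbb{D}_{\mathbb{H}}(c,r)=\{q\in\mathbb{H}: |q-c|\le r\}$ for some $c\in\mathbb{H}$, $r\ge 0$, then its center is the origin, i.e. $W(A)=\mathbb{D}_{\mathbb{H}}(0,r)$.
   Context: $\mathbb{H}$ denotes the real quaternions with basis $1,i,j,k$, $i^2=j^2=k^2=ijk=-1$; for $q\in\mathbb{H}$, $q^*$ is its conjugate and $|q|^2=qq^*$. For $\mathbf{x}\in\mathbb{H}^n$, $\mathbf{x}^*$ is the conjugate transpose, and $\mathbb{S}_{\mathbb{H}^n}=\{\mathbf{x}\in\mathbb{H}^n:\mathbf{x}^*\mathbf{x}=1\}$. The (quaternionic) numerical range of $A\in\mathcal{M}_n(\mathbb{H})$ is $W(A)=\{\mathbf{x}^*A\mathbf{x}:\mathbf{x}\in\mathbb{S}_{\mathbb{H}^n}\}\subseteq\mathbb{H}$. *)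

theory Defs
  imports "HOL-Analysis.Analysis"
begin

datatype quat = Quat (qre: real) (qi: real) (qj: real) (qk: real)

definition qzero :: quat where "qzero = Quat 0 0 0 0"

definition qadd :: "quat \<Rightarrow> quat \<Rightarrow> quat" where
  "qadd p q = Quat (qre p + qre q) (qi p + qi q) (qj p + qj q) (qk p + qk q)"

definition qsub :: "quat \<Rightarrow> quat \<Rightarrow> quat" where
  "qsub p q = Quat (qre p - qre q) (qi p - qi q) (qj p - qj q) (qk p - qk q)"

text \<open>Hamilton product, from i^2 = j^2 = k^2 = ijk = -1.\<close>
definition qmul :: "quat \<Rightarrow> quat \<Rightarrow> quat" where
  "qmul p q = Quat
     (qre p * qre q - qi p * qi q - qj p * qj q - qk p * qk q)
     (qre p * qi q + qi p * qre q + qj p * qk q - qk p * qj q)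
     (qre p * qj q - qi p * qk q + qj p * qre q + qk p * qi q)
     (qre p * qk q + qi p * qj q - qj p * qi q + qk p * qre q)"

definition qcnj :: "quat \<Rightarrow> quat" where
  "qcnj q = Quat (qre q) (- qi q) (- qj q) (- qk q)"

definition qnorm :: "quat \<Rightarrow> real" where
  "qnorm q = sqrt ((qre q)\<^sup>2 + (qi q)\<^sup>2 + (qj q)\<^sup>2 + (qk q)\<^sup>2)"

fun qsum :: "nat \<Rightarrow> (nat \<Rightarrow> quat) \<Rightarrow> quat" where
  "qsum 0 f = qzero"
| "qsum (Suc n) f = qadd (qsum n f) (f n)"

text \<open>n x n quaternion matrices are functions nat => nat => quat, only entries with
  indices < n are relevant.\<close>
type_synonym qmat = "nat \<Rightarrow> nat \<Rightarrow> quat"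

definition qmat_mult :: "nat \<Rightarrow> qmat \<Rightarrow> qmat \<Rightarrow> qmat" where
  "qmat_mult n A B = (\<lambda>i j. qsum n (\<lambda>l. qmul (A i l) (B l j)))"

definition qmat_id :: "nat \<Rightarrow> qmat" where
  "qmat_id n = (\<lambda>i j. if i = j then Quat 1 0 0 0 else qzero)"

fun qmat_pow :: "nat \<Rightarrow> qmat \<Rightarrow> nat \<Rightarrow> qmat" where
  "qmat_pow n A 0 = qmat_id n"
| "qmat_pow n A (Suc k) = qmat_mult n (qmat_pow n A k) A"

definition qmat_nilpotent :: "nat \<Rightarrow> qmat \<Rightarrow> bool" where
  "qmat_nilpotent n A \<longleftrightarrow> (\<exists>k. \<forall>i<n. \<forall>j<n. qmat_pow n A k i j = qzero)"

definition qsphere :: "nat \<Rightarrow> (nat \<Rightarrow> quat) set" where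
  "qsphere n = {x. qsum n (\<lambda>i. qmul (qcnj (x i)) (x i)) = Quat 1 0 0 0}"

definition qnumrange :: "nat \<Rightarrow> qmat \<Rightarrow> quat set" where
  "qnumrange n A = {qsum n (\<lambda>i. qsum n (\<lambda>j. qmul (qmul (qcnj (x i)) (A i j)) (x j))) | x. x \<in> qsphere n}"

definition qdisk :: "quat \<Rightarrow> real \<Rightarrow> quat set" where
  "qdisk c r = {q. qnorm (qsub q c) \<le> r}"

end

theory Submission
  imports Defs "Jordan_Normal_Form.Determinant"
begin


lemma quat_eq_iff: "p = q \<longleftrightarrow> qre p = qre q \<and> qi p = qi q \<and> qj p = qj q \<and> qk p = qk q"
  by (cases p; cases q) auto

instantiation quat :: ring_1
begin
definition zero_quat_def: "0 = Quat 0 0 0 0"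
definition one_quat_def: "1 = Quat 1 0 0 0"
definition plus_quat_def: "p + q = qadd p q"
definition minus_quat_def: "p - q = qsub p q"
definition uminus_quat_def: "- q = Quat (- qre q) (- qi q) (- qj q) (- qk q)"
definition times_quat_def: "p * q = qmul p q"
instance
  by intro_classes (auto simp: quat_eq_iff zero_quat_def one_quat_def plus_quat_def minus_quat_def
       uminus_quat_def times_quat_def qadd_def qsub_def qmul_def algebra_simps)
end

instantiation quat :: real_algebra_1
begin
definition scaleR_quat_def: "scaleR r q = Quat (r * qre q) (r * qi q) (r * qj q) (r * qk q)"
instance
  by intro_classes (auto simp: quat_eq_iff zero_quat_def one_quat_def plus_quat_def minus_quat_def
       uminus_quat_def times_quat_def qadd_def qsub_def qmul_def scaleR_quat_def algebra_simps)
end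

lemma quat_sel[simp]:
  "qre 0 = 0" "qi 0 = 0" "qj 0 = 0" "qk 0 = 0"
  "qre 1 = 1" "qi 1 = 0" "qj 1 = 0" "qk 1 = 0"
  "qre (p + q) = qre p + qre q" "qi (p + q) = qi p + qi q" "qj (p + q) = qj p + qj q" "qk (p + q) = qk p + qk q"
  "qre (p - q) = qre p - qre q" "qi (p - q) = qi p - qi q" "qj (p - q) = qj p - qj q" "qk (p - q) = qk p - qk q"
  "qre (- q) = - qre q" "qi (- q) = - qi q" "qj (- q) = - qj q" "qk (- q) = - qk q"
  "qre (r *\<^sub>R q) = r * qre q" "qi (r *\<^sub>R q) = r * qi q" "qj (r *\<^sub>R q) = r * qj q" "qk (r *\<^sub>R q) = r * qk q"
  by (simp_all add: zero_quat_def one_quat_def plus_quat_def minus_quat_def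
       uminus_quat_def qadd_def qsub_def scaleR_quat_def)

lemma quat_mult_sel[simp]:
  "qre (p * q) = qre p * qre q - qi p * qi q - qj p * qj q - qk p * qk q"
  "qi (p * q) = qre p * qi q + qi p * qre q + qj p * qk q - qk p * qj q"
  "qj (p * q) = qre p * qj q - qi p * qk q + qj p * qre q + qk p * qi q"
  "qk (p * q) = qre p * qk q + qi p * qj q - qj p * qi q + qk p * qre q"
  by (simp_all add: times_quat_def qmul_def)

lemma qzero_eq: "qzero = 0" by (simp add: qzero_def zero_quat_def)
lemma qadd_eq: "qadd p q = p + q" by (simp add: plus_quat_def)
lemma qsub_eq: "qsub p q = p - q" by (simp add: minus_quat_def)
lemma qmul_eq: "qmul p q = p * q" by (simp add: times_quat_def)
lemma qsum_eq: "qsum n f = (\<Sum>k<n. f k)"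
  by (induction n) (simp_all add: qzero_eq qadd_eq)

lemma quat_sum_sel[simp]:
  "qre (sum f A) = (\<Sum>a\<in>A. qre (f a))" "qi (sum f A) = (\<Sum>a\<in>A. qi (f a))"
  "qj (sum f A) = (\<Sum>a\<in>A. qj (f a))" "qk (sum f A) = (\<Sum>a\<in>A. qk (f a))"
  by (induction A rule: infinite_finite_induct; simp)+


lemma qcnj_sel[simp]: "qre (qcnj q) = qre q" "qi (qcnj q) = - qi q" "qj (qcnj q) = - qj q" "qk (qcnj q) = - qk q"
  by (simp_all add: qcnj_def)

lemma qcnj_mult: "qcnj (p * q) = qcnj q * qcnj p" by (simp add: quat_eq_iff)
lemma qcnj_add: "qcnj (p + q) = qcnj p + qcnj q" by (simp add: quat_eq_iff)
lemma qcnj_diff: "qcnj (p - q) = qcnj p - qcnj q" by (simp add: quat_eq_iff)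
lemma qcnj_cnj[simp]: "qcnj (qcnj q) = q" by (simp add: quat_eq_iff)
lemma qcnj_sum: "qcnj (sum f A) = (\<Sum>a\<in>A. qcnj (f a))"
  by (simp add: quat_eq_iff sum_negf)
lemma qcnj_of_real[simp]: "qcnj (of_real r) = of_real r"
  by (simp add: quat_eq_iff of_real_def)
lemma qre_cnj_mult3: "qre (qcnj a * X * b) = qre (qcnj b * qcnj X * a)"
  by (simp add: algebra_simps)
lemma qre_comm: "qre (p * q) = qre (q * p)" by (simp add: algebra_simps)
lemma of_real_sel[simp]: "qre (of_real r) = r" "qi (of_real r) = 0" "qj (of_real r) = 0" "qk (of_real r) = 0"
  by (simp_all add: of_real_def)

definition nsq :: "quat \<Rightarrow> real" where
  "nsq q = (qre q)\<^sup>2 + (qi q)\<^sup>2 + (qj q)\<^sup>2 + (qk q)\<^sup>2"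

lemma nsq_mult: "nsq (p * q) = nsq p * nsq q"
  by (simp add: nsq_def power2_eq_square algebra_simps)
lemma nsq_pow: "nsq (q ^ k) = nsq q ^ k"
proof (induction k)
  case 0 then show ?case by (simp add: nsq_def)
next
  case (Suc k) then show ?case by (simp only: power_Suc nsq_mult)
qed
lemma nsq_zero_iff: "nsq q = 0 \<longleftrightarrow> q = 0"
  by (auto simp: nsq_def quat_eq_iff sum_power2_eq_zero_iff add_nonneg_eq_0_iff)
lemma cnj_mult_self: "qcnj q * q = of_real (nsq q)"
  by (simp add: quat_eq_iff nsq_def power2_eq_square algebra_simps)




definition un :: "nat \<Rightarrow> quat" where
  "un s = (if s = 0 then Quat 1 0 0 0 else if s = 1 then Quat 0 1 0 0 else if s = 2 then Quat 0 0 1 0 else Quat 0 0 0 1)"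
definition comp :: "nat \<Rightarrow> quat \<Rightarrow> real" where
  "comp s q = (if s = 0 then qre q else if s = 1 then qi q else if s = 2 then qj q else qk q)"
definition qv :: "(nat \<Rightarrow> real) \<Rightarrow> nat \<Rightarrow> quat" where
  "qv \<xi> i = Quat (\<xi> (4*i)) (\<xi> (Suc (4*i))) (\<xi> (Suc (Suc (4*i)))) (\<xi> (Suc (Suc (Suc (4*i)))))"
definition cv :: "(nat \<Rightarrow> quat) \<Rightarrow> nat \<Rightarrow> real" where
  "cv x a = comp (a mod 4) (x (a div 4))"

lemma sum4: "(\<Sum>a<4*(n::nat). (f a :: 'a::comm_monoid_add)) = (\<Sum>i<n. f (4*i) + f (Suc (4*i)) + f (Suc (Suc (4*i))) + f (Suc (Suc (Suc (4*i)))))"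
proof (induction n)
  case 0 then show ?case by simp
next
  case (Suc n)
  have e: "4 * Suc n = Suc (Suc (Suc (Suc (4*n))))" by simp
  show ?case unfolding e sum.lessThan_Suc Suc by (simp add: add.assoc)
qed

lemma comp_add: "comp s (p + q) = comp s p + comp s q" by (simp add: comp_def)
lemma comp_scale: "comp s (r *\<^sub>R q) = r * comp s q" by (simp add: comp_def)
lemma comp_sum: "comp s (sum f A) = (\<Sum>a\<in>A. comp s (f a))" by (simp add: comp_def)

lemma qv_expand: "qv \<xi> j = \<xi> (4*j) *\<^sub>R un 0 + \<xi> (Suc (4*j)) *\<^sub>R un 1 + \<xi> (Suc (Suc (4*j))) *\<^sub>R un 2 + \<xi> (Suc (Suc (Suc (4*j)))) *\<^sub>R un 3"
  by (simp add: quat_eq_iff qv_def un_def)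

lemma div4[simp]: "(4*i) div 4 = (i::nat)" "(4*i) mod 4 = (0::nat)"
  "Suc (4*i) div 4 = i" "Suc (4*i) mod 4 = 1"
  "Suc (Suc (4*i)) div 4 = i" "Suc (Suc (4*i)) mod 4 = 2"
  "Suc (Suc (Suc (4*i))) div 4 = i" "Suc (Suc (Suc (4*i))) mod 4 = 3"
  by presburger+

lemma qv_cv[simp]: "qv (cv x) = x"
  by (rule ext) (simp add: quat_eq_iff qv_def cv_def comp_def)

lemma cv_qv: "cv (qv \<xi>) a = \<xi> a"
proof -
  obtain i where i: "i = a div 4" by blast
  have "a = 4*i \<or> a = Suc (4*i) \<or> a = Suc (Suc (4*i)) \<or> a = Suc (Suc (Suc (4*i)))"
    using i by presburger
  then show ?thesis by (elim disjE) (simp_all add: cv_def qv_def comp_def)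
qed

definition mv :: "nat \<Rightarrow> qmat \<Rightarrow> (nat \<Rightarrow> quat) \<Rightarrow> nat \<Rightarrow> quat" where
  "mv n A x i = (\<Sum>j<n. A i j * x j)"
definition mhv :: "nat \<Rightarrow> qmat \<Rightarrow> (nat \<Rightarrow> quat) \<Rightarrow> nat \<Rightarrow> quat" where
  "mhv n A x i = (\<Sum>j<n. qcnj (A j i) * x j)"
definition FF :: "nat \<Rightarrow> qmat \<Rightarrow> (nat \<Rightarrow> quat) \<Rightarrow> quat" where
  "FF n A x = (\<Sum>i<n. \<Sum>j<n. qcnj (x i) * A i j * x j)"

definition pm :: "qmat \<Rightarrow> nat \<Rightarrow> nat \<Rightarrow> real" where
  "pm A a b = comp (a mod 4) ((1/2) *\<^sub>R ((A (a div 4) (b div 4) + qcnj (A (b div 4) (a div 4))) * un (b mod 4)))"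
definition qm :: "qmat \<Rightarrow> quat \<Rightarrow> nat \<Rightarrow> nat \<Rightarrow> real" where
  "qm A e a b = comp (a mod 4) ((1/2) *\<^sub>R (A (a div 4) (b div 4) * (un (b mod 4) * qcnj e)
        + qcnj (A (b div 4) (a div 4)) * un (b mod 4) * e))"

lemma pm_group: "pm A a (4*j) * \<xi> (4*j) + pm A a (Suc (4*j)) * \<xi> (Suc (4*j)) + pm A a (Suc (Suc (4*j))) * \<xi> (Suc (Suc (4*j)))
   + pm A a (Suc (Suc (Suc (4*j)))) * \<xi> (Suc (Suc (Suc (4*j))))
  = comp (a mod 4) ((1/2) *\<^sub>R ((A (a div 4) j + qcnj (A j (a div 4))) * qv \<xi> j))"
  unfolding pm_def qv_expand
  apply (simp only: div4)
  apply (simp only: distrib_left mult_scaleR_right scaleR_add_right comp_add comp_scale)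
  by (simp add: algebra_simps)

lemma qm_group: "qm A e a (4*j) * \<xi> (4*j) + qm A e a (Suc (4*j)) * \<xi> (Suc (4*j)) + qm A e a (Suc (Suc (4*j))) * \<xi> (Suc (Suc (4*j)))
   + qm A e a (Suc (Suc (Suc (4*j)))) * \<xi> (Suc (Suc (Suc (4*j))))
  = comp (a mod 4) ((1/2) *\<^sub>R (A (a div 4) j * (qv \<xi> j * qcnj e) + qcnj (A j (a div 4)) * qv \<xi> j * e))"
  unfolding qm_def qv_expand
  apply (simp only: div4)
  apply (simp only: distrib_left distrib_right mult_scaleR_right mult_scaleR_left scaleR_add_right comp_add comp_scale)
  by (simp add: algebra_simps)

lemma pm_row:
  "(\<Sum>b<4*n. pm A a b * \<xi> b) = comp (a mod 4) ((1/2) *\<^sub>R (mv n A (qv \<xi>) (a div 4) + mhv n A (qv \<xi>) (a div 4)))"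
  unfolding sum4 pm_group comp_sum[symmetric] mv_def mhv_def scaleR_sum_right[symmetric] sum.distrib[symmetric]
  by (simp add: distrib_right)

lemma qm_row:
  "(\<Sum>b<4*n. qm A e a b * \<xi> b) = comp (a mod 4) ((1/2) *\<^sub>R (mv n A (\<lambda>j. qv \<xi> j * qcnj e) (a div 4) + mhv n A (qv \<xi>) (a div 4) * e))"
  unfolding sum4 qm_group comp_sum[symmetric] mv_def mhv_def scaleR_sum_right[symmetric] sum.distrib[symmetric] sum_distrib_right
  by simp


lemma comp_re: "s < 4 \<Longrightarrow> comp s q = qre (qcnj (un s) * q)"
  by (cases s; cases "s - 1"; cases "s - 2"; auto simp: comp_def un_def)

lemma mod4_lt: "(a::nat) mod 4 < 4" by simp

lemma pm_sym: "pm A a b = pm A b a"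
  unfolding pm_def comp_re[OF mod4_lt] by (simp add: algebra_simps)

lemma qm_sym: "qm A e a b = qm A e b a"
proof -
  have 1: "qre (qcnj (un s) * (X * (un t * qcnj e))) = qre (qcnj (un t) * (qcnj X * un s * e))" for s t X
  proof -
    have "qre (qcnj (un s) * (X * (un t * qcnj e))) = qre (qcnj (un s) * X * un t * qcnj e)"
      by (simp only: mult.assoc)
    also have "\<dots> = qre (qcnj e * (qcnj (un s) * X * un t))" by (rule qre_comm)
    also have "\<dots> = qre (qcnj (qcnj (un t) * qcnj X * un s * e))"
      by (simp only: qcnj_mult qcnj_cnj mult.assoc)
    also have "\<dots> = qre (qcnj (un t) * (qcnj X * un s * e))" by (simp only: qcnj_sel mult.assoc)
    finally show ?thesis .
  qed
  show ?thesis
    unfolding qm_def comp_re[OF mod4_lt] scaleR_right_distrib mult_scaleR_right distrib_left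
    using 1[of "a mod 4" "A (a div 4) (b div 4)" "b mod 4"] 1[of "b mod 4" "A (b div 4) (a div 4)" "a mod 4"]
    by (simp add: mult.assoc)
qed

lemma form_sum: "(\<Sum>a<4*n. \<xi> a * comp (a mod 4) (V (a div 4))) = (\<Sum>i<n. qre (qcnj (qv \<xi> i) * V i))"
  unfolding sum4 by (simp add: qv_def comp_def)

lemma re_mhv: "(\<Sum>i<n. qre (qcnj (x i) * mhv n A x i)) = qre (FF n A x)"
proof -
  have "(\<Sum>i<n. qre (qcnj (x i) * mhv n A x i)) = (\<Sum>i<n. \<Sum>j<n. qre (qcnj (x i) * qcnj (A j i) * x j))"
    by (simp add: mhv_def sum_distrib_left mult.assoc)
  also have "\<dots> = (\<Sum>i<n. \<Sum>j<n. qre (qcnj (x j) * A j i * x i))"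
    by (intro sum.cong refl) (simp add: algebra_simps)
  also have "\<dots> = qre (FF n A x)" unfolding FF_def quat_sum_sel by (rule sum.swap)
  finally show ?thesis .
qed

lemma re_mv: "(\<Sum>i<n. qre (qcnj (x i) * mv n A x i)) = qre (FF n A x)"
  by (simp add: mv_def FF_def sum_distrib_left mult.assoc)

lemma pm_form: "(\<Sum>a<4*n. \<xi> a * (\<Sum>b<4*n. pm A a b * \<xi> b)) = qre (FF n A (qv \<xi>))"
proof -
  let ?x = "qv \<xi>"
  have "(\<Sum>a<4*n. \<xi> a * (\<Sum>b<4*n. pm A a b * \<xi> b))
     = (\<Sum>i<n. qre (qcnj (?x i) * ((1/2) *\<^sub>R (mv n A ?x i + mhv n A ?x i))))"
    unfolding pm_row by (rule form_sum[where V = "\<lambda>i. (1/2) *\<^sub>R (mv n A ?x i + mhv n A ?x i)"])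
  also have "\<dots> = (1/2) * (\<Sum>i<n. qre (qcnj (?x i) * mv n A ?x i)) + (1/2) * (\<Sum>i<n. qre (qcnj (?x i) * mhv n A ?x i))"
    by (simp add: distrib_left sum.distrib sum_distrib_left del: quat_mult_sel)
  also have "\<dots> = qre (FF n A ?x)" using re_mv[where x="?x"] re_mhv[where x="?x"] by simp
  finally show ?thesis .
qed

lemma qm_form: "(\<Sum>a<4*n. \<xi> a * (\<Sum>b<4*n. qm A e a b * \<xi> b)) = qre (FF n A (qv \<xi>) * qcnj e)"
proof -
  let ?x = "qv \<xi>"
  have 1: "(\<Sum>i<n. qre (qcnj (?x i) * mv n A (\<lambda>j. ?x j * qcnj e) i)) = qre (FF n A ?x * qcnj e)"
    by (simp add: mv_def FF_def sum_distrib_left sum_distrib_right mult.assoc del: quat_mult_sel)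
  have 2: "(\<Sum>i<n. qre (qcnj (?x i) * (mhv n A ?x i * e))) = qre (FF n A ?x * qcnj e)"
  proof -
    have "(\<Sum>i<n. qre (qcnj (?x i) * (mhv n A ?x i * e))) = (\<Sum>i<n. \<Sum>j<n. qre (qcnj (?x i) * qcnj (A j i) * (?x j * e)))"
      by (simp add: mhv_def sum_distrib_left sum_distrib_right mult.assoc del: quat_mult_sel)
    also have "\<dots> = (\<Sum>i<n. \<Sum>j<n. qre (qcnj (?x j) * A j i * ?x i * qcnj e))"
    proof (intro sum.cong refl)
      fix i j
      have "qre (qcnj (?x i) * qcnj (A j i) * (?x j * e)) = qre (qcnj (?x j * e) * qcnj (qcnj (A j i)) * ?x i)"
        by (rule qre_cnj_mult3)
      also have "\<dots> = qre (qcnj e * (qcnj (?x j) * A j i * ?x i))" by (simp only: qcnj_mult qcnj_cnj mult.assoc)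
      also have "\<dots> = qre (qcnj (?x j) * A j i * ?x i * qcnj e)" by (rule qre_comm)
      finally show "qre (qcnj (?x i) * qcnj (A j i) * (?x j * e)) = qre (qcnj (?x j) * A j i * ?x i * qcnj e)" .
    qed
    also have "\<dots> = (\<Sum>j<n. \<Sum>i<n. qre (qcnj (?x j) * A j i * ?x i * qcnj e))" by (rule sum.swap)
    also have "\<dots> = qre (FF n A ?x * qcnj e)" by (simp add: FF_def sum_distrib_right)
    finally show ?thesis .
  qed
  have "(\<Sum>a<4*n. \<xi> a * (\<Sum>b<4*n. qm A e a b * \<xi> b))
     = (\<Sum>i<n. qre (qcnj (?x i) * ((1/2) *\<^sub>R (mv n A (\<lambda>j. ?x j * qcnj e) i + mhv n A ?x i * e))))"
    unfolding qm_row by (rule form_sum[where V = "\<lambda>i. (1/2) *\<^sub>R (mv n A (\<lambda>j. ?x j * qcnj e) i + mhv n A ?x i * e)"])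
  also have "\<dots> = (1/2) * (\<Sum>i<n. qre (qcnj (?x i) * mv n A (\<lambda>j. ?x j * qcnj e) i)) + (1/2) * (\<Sum>i<n. qre (qcnj (?x i) * (mhv n A ?x i * e)))"
    by (simp add: distrib_left sum.distrib sum_distrib_left del: quat_mult_sel)
  also have "\<dots> = qre (FF n A ?x * qcnj e)" using 1 2 by simp
  finally show ?thesis .
qed




definition QF :: "nat \<Rightarrow> (nat \<Rightarrow> nat \<Rightarrow> real) \<Rightarrow> (nat \<Rightarrow> real) \<Rightarrow> real" where
  "QF m S z = (\<Sum>a<m. z a * (\<Sum>b<m. S a b * z b))"

lemma QF_scale: "QF m S (\<lambda>a. s * z a) = s\<^sup>2 * QF m S z"
  unfolding QF_def by (simp add: sum_distrib_left power2_eq_square algebra_simps)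

lemma QF_add: 
  assumes sym: "\<And>a b. a < m \<Longrightarrow> b < m \<Longrightarrow> S a b = S b a"
  shows "QF m S (\<lambda>a. z a + t * y a) = QF m S z + 2 * t * (\<Sum>a<m. y a * (\<Sum>b<m. S a b * z b)) + t\<^sup>2 * QF m S y"
proof -
  have sw: "(\<Sum>a<m. z a * (\<Sum>b<m. S a b * y b)) = (\<Sum>a<m. y a * (\<Sum>b<m. S a b * z b))"
  proof -
    have "(\<Sum>a<m. z a * (\<Sum>b<m. S a b * y b)) = (\<Sum>a<m. \<Sum>b<m. z a * S a b * y b)"
      by (simp add: sum_distrib_left mult.assoc)
    also have "\<dots> = (\<Sum>b<m. \<Sum>a<m. z a * S a b * y b)" by (rule sum.swap)
    also have "\<dots> = (\<Sum>b<m. \<Sum>a<m. y b * (S b a * z a))"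
      by (intro sum.cong refl) (simp add: sym)
    also have "\<dots> = (\<Sum>b<m. y b * (\<Sum>a<m. S b a * z a))" by (simp add: sum_distrib_left)
    finally show ?thesis .
  qed
  have inner: "(\<Sum>b<m. S a b * (z b + t * y b)) = (\<Sum>b<m. S a b * z b) + t * (\<Sum>b<m. S a b * y b)" for a
    by (simp add: distrib_left sum.distrib sum_distrib_left mult.left_commute)
  have pt: "(z a + t * y a) * (\<Sum>b<m. S a b * (z b + t * y b)) = z a * (\<Sum>b<m. S a b * z b) + t * (z a * (\<Sum>b<m. S a b * y b))
     + t * (y a * (\<Sum>b<m. S a b * z b)) + t\<^sup>2 * (y a * (\<Sum>b<m. S a b * y b))" for a
    unfolding inner by (simp add: algebra_simps power2_eq_square)
  show ?thesis
    unfolding QF_def pt sum.distrib sum_distrib_left[symmetric] sw by simp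
qed

lemma psd_kernel:
  assumes sym: "\<And>a b. a < m \<Longrightarrow> b < m \<Longrightarrow> S a b = S b a"
    and psd: "\<And>z. 0 \<le> QF m S z"
    and z0: "QF m S x = 0"
    and a: "a < m"
  shows "(\<Sum>b<m. S a b * x b) = 0"
proof -
  define y where "y a = (\<Sum>b<m. S a b * x b)" for a
  define Y where "Y = (\<Sum>a<m. y a * y a)"
  define K where "K = QF m S y"
  have K: "K \<ge> 0" unfolding K_def by (rule psd)
  have Y: "Y \<ge> 0" unfolding Y_def by (simp add: sum_nonneg)
  have eq: "QF m S (\<lambda>a. x a + t * y a) = 2 * t * Y + t\<^sup>2 * K" for t
    using QF_add[OF sym, where z=x and t=t and y=y] z0 unfolding Y_def K_def y_def by simp
  have "Y = 0"
  proof (rule ccontr)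
    assume "Y \<noteq> 0"
    with Y have Yp: "Y > 0" by simp
    define t where "t = - Y / (K + 1)"
    have Kn: "K + 1 \<noteq> 0" using K by simp
    have tD: "t * (K + 1) = - Y" unfolding t_def using Kn by simp
    have "(2 * t * Y + t\<^sup>2 * K) * (K + 1)\<^sup>2 = 2 * Y * (t * (K + 1)) * (K + 1) + (t * (K + 1))\<^sup>2 * K"
      by (simp add: algebra_simps power2_eq_square)
    also have "\<dots> = Y\<^sup>2 * (- K - 2)" unfolding tD by (simp add: algebra_simps power2_eq_square)
    also have "\<dots> < 0" using K Yp by (intro mult_pos_neg) auto
    finally have neg: "(2 * t * Y + t\<^sup>2 * K) * (K + 1)\<^sup>2 < 0" .
    have "2 * t * Y + t\<^sup>2 * K < 0"
    proof (rule ccontr)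
      assume "\<not> ?thesis"
      then have "0 \<le> (2 * t * Y + t\<^sup>2 * K) * (K + 1)\<^sup>2" by simp
      with neg show False by simp
    qed
    then show False using psd[of "\<lambda>a. x a + t * y a"] eq[of t] by simp
  qed
  then have "\<forall>a\<in>{..<m}. y a * y a = 0" unfolding Y_def
    by (subst (asm) sum_nonneg_eq_0_iff) auto
  then show ?thesis using a unfolding y_def by simp
qed




lemma poly_det_step:
  fixes k0 k1 k2 :: "nat \<Rightarrow> nat \<Rightarrow> real"
  assumes H: "\<And>u::real. \<exists>\<xi>. (\<exists>a<m. \<xi> a \<noteq> 0) \<and> (\<forall>a<m. (\<Sum>b<m. (k0 a b + u * k1 a b + u\<^sup>2 * k2 a b) * \<xi> b) = 0)"
  shows "\<exists>v::nat \<Rightarrow> complex. (\<exists>a<m. v a \<noteq> 0) \<and>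
     (\<forall>a<m. (\<Sum>b<m. (of_real (k0 a b) + \<i> * of_real (k1 a b) - of_real (k2 a b)) * v b) = 0)"
proof -
  define Mp :: "complex poly mat" where
    "Mp = mat m m (\<lambda>(a,b). [:of_real (k0 a b), of_real (k1 a b), of_real (k2 a b):])"
  define ev where "ev z = map_mat (\<lambda>f. poly f z) Mp" for z
  have evc: "ev z \<in> carrier_mat m m" for z unfolding ev_def Mp_def by simp
  have ev_ent: "a < m \<Longrightarrow> b < m \<Longrightarrow> ev z $$ (a,b) = of_real (k0 a b) + z * of_real (k1 a b) + z\<^sup>2 * of_real (k2 a b)" for z a b
    unfolding ev_def Mp_def by (simp add: power2_eq_square algebra_simps)
  have dethom: "det (ev z) = poly (det Mp) z" for z
  proof -
    interpret h: comm_ring_hom "\<lambda>f. poly f z" by unfold_locales auto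
    show ?thesis unfolding ev_def by (rule h.hom_det)
  qed
  have mulv: "(ev z *\<^sub>v v) $ a = (\<Sum>b<m. ev z $$ (a,b) * v $ b)" if "a < m" "v \<in> carrier_vec m" for z v a
    using that evc[of z] unfolding index_mult_mat_vec[of a "ev z" v]
    by (auto simp: scalar_prod_def lessThan_atLeast0 intro!: sum.cong)
  have zero_real: "poly (det Mp) (of_real u) = 0" for u
  proof -
    obtain \<xi> where nz: "\<exists>a<m. \<xi> a \<noteq> 0" and k: "\<forall>a<m. (\<Sum>b<m. (k0 a b + u * k1 a b + u\<^sup>2 * k2 a b) * \<xi> b) = 0"
      using H[of u] by blast
    define v where "v = vec m (\<lambda>a. complex_of_real (\<xi> a))"
    have vc: "v \<in> carrier_vec m" unfolding v_def by simp
    have vnz: "v \<noteq> 0\<^sub>v m"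
    proof
      assume "v = 0\<^sub>v m"
      then have "\<forall>a<m. v $ a = 0" by simp
      with nz show False unfolding v_def by auto
    qed
    have "ev (of_real u) *\<^sub>v v = 0\<^sub>v m"
    proof (rule eq_vecI)
      fix a assume a: "a < dim_vec (0\<^sub>v m :: complex vec)"
      then have a': "a < m" by simp
      have "(ev (of_real u) *\<^sub>v v) $ a = (\<Sum>b<m. complex_of_real ((k0 a b + u * k1 a b + u\<^sup>2 * k2 a b) * \<xi> b))"
        unfolding mulv[OF a' vc] using a' by (intro sum.cong refl) (simp add: ev_ent v_def)
      also have "\<dots> = 0" using k a' by (simp only: of_real_sum[symmetric]) simp
      finally show "(ev (of_real u) *\<^sub>v v) $ a = 0\<^sub>v m $ a" using a' by simp
    qed (simp add: evc[THEN carrier_matD(1)])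
    then have "det (ev (of_real u)) = 0"
      using det_0_iff_vec_prod_zero[OF evc] vc vnz by blast
    then show ?thesis unfolding dethom .
  qed
  have "det Mp = 0"
  proof (rule ccontr)
    assume "det Mp \<noteq> 0"
    then have "finite {z. poly (det Mp) z = 0}" by (rule poly_roots_finite)
    moreover have "range complex_of_real \<subseteq> {z. poly (det Mp) z = 0}" using zero_real by auto
    moreover have "infinite (range complex_of_real)"
    proof
      assume "finite (range complex_of_real)"
      then have "finite (UNIV :: real set)" by (rule finite_imageD) (simp add: inj_on_def)
      then show False using infinite_UNIV_char_0 by blast
    qed
    ultimately show False using finite_subset by blast
  qed
  then have "det (ev \<i>) = 0" unfolding dethom by simp
  then obtain v where vc: "v \<in> carrier_vec m" and vnz: "v \<noteq> 0\<^sub>v m" and kv: "ev \<i> *\<^sub>v v = 0\<^sub>v m"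
    using det_0_iff_vec_prod_zero[OF evc] by blast
  have "\<exists>a<m. v $ a \<noteq> 0"
  proof (rule ccontr)
    assume "\<not> ?thesis"
    then have "v = 0\<^sub>v m" using vc by (intro eq_vecI) auto
    with vnz show False by simp
  qed
  moreover have "(\<Sum>b<m. (of_real (k0 a b) + \<i> * of_real (k1 a b) - of_real (k2 a b)) * v $ b) = 0" if a: "a < m" for a
  proof -
    have "(\<Sum>b<m. (of_real (k0 a b) + \<i> * of_real (k1 a b) - of_real (k2 a b)) * v $ b) = (ev \<i> *\<^sub>v v) $ a"
      unfolding mulv[OF a vc] using a by (intro sum.cong refl) (simp add: ev_ent power2_eq_square)
    also have "\<dots> = 0" using kv a by simp
    finally show ?thesis .
  qed
  ultimately show ?thesis by (intro exI[of _ "\<lambda>b. v $ b"]) auto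
qed




lemma sphere_iff: "x \<in> qsphere n \<longleftrightarrow> (\<Sum>i<n. nsq (x i)) = 1"
proof -
  have "qsum n (\<lambda>i. qmul (qcnj (x i)) (x i)) = of_real (\<Sum>i<n. nsq (x i))"
    by (simp add: qsum_eq qmul_eq cnj_mult_self)
  moreover have "Quat 1 0 0 0 = (of_real 1 :: quat)" by (simp add: quat_eq_iff)
  ultimately show ?thesis unfolding qsphere_def by (simp only: mem_Collect_eq of_real_eq_iff)
qed

lemma sumsq_qv: "(\<Sum>a<4*n. (\<xi> a)\<^sup>2) = (\<Sum>i<n. nsq (qv \<xi> i))"
  unfolding sum4 by (simp add: nsq_def qv_def add.assoc)

lemma numrange_eq: "qnumrange n A = FF n A ` qsphere n"
  unfolding qnumrange_def FF_def by (auto simp: qsum_eq qmul_eq)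

lemma comp_qv: "s < 4 \<Longrightarrow> comp s (qv \<xi> i) = \<xi> (4*i + s)"
  by (cases s; cases "s - 1"; cases "s - 2"; auto simp: comp_def qv_def)

lemma comp_ext: "(\<And>s. s < 4 \<Longrightarrow> comp s p = comp s q) \<Longrightarrow> p = q"
proof -
  assume h: "\<And>s. s < 4 \<Longrightarrow> comp s p = comp s q"
  from h[of 0] h[of 1] h[of 2] h[of 3] show "p = q" by (simp add: comp_def quat_eq_iff)
qed

lemma cs2:
  fixes X Y r u :: real
  assumes "X\<^sup>2 + Y\<^sup>2 \<le> r\<^sup>2" "r \<ge> 0"
  shows "(1 - u\<^sup>2) * X + 2 * u * Y \<le> r * (1 + u\<^sup>2)"
proof -
  have A: "((1 - u\<^sup>2) * X + 2 * u * Y)\<^sup>2 + ((1 - u\<^sup>2) * Y - 2 * u * X)\<^sup>2 = (1 + u\<^sup>2)\<^sup>2 * (X\<^sup>2 + Y\<^sup>2)"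
    by (simp add: power2_eq_square algebra_simps)
  have B: "(1 + u\<^sup>2)\<^sup>2 * (X\<^sup>2 + Y\<^sup>2) \<le> (1 + u\<^sup>2)\<^sup>2 * r\<^sup>2" using assms(1) by (intro mult_left_mono) auto
  have C: "(1 + u\<^sup>2)\<^sup>2 * r\<^sup>2 = (r * (1 + u\<^sup>2))\<^sup>2" by (simp add: power_mult_distrib)
  have D: "0 \<le> ((1 - u\<^sup>2) * Y - 2 * u * X)\<^sup>2" by simp
  have "((1 - u\<^sup>2) * X + 2 * u * Y)\<^sup>2 \<le> (r * (1 + u\<^sup>2))\<^sup>2" using A B C D by linarith
  then show ?thesis by (rule power2_le_imp_le) (use assms(2) in simp)
qed

definition is_e :: "quat \<Rightarrow> bool" where "is_e e \<longleftrightarrow> e = un 1 \<or> e = un 2 \<or> e = un 3"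

lemma e_cases: "is_e e \<Longrightarrow> e = Quat 0 1 0 0 \<or> e = Quat 0 0 1 0 \<or> e = Quat 0 0 0 1"
  by (simp add: is_e_def un_def)

lemma e_facts:
  assumes "is_e e"
  shows "e * e = -1" "qcnj e = - e" "qre (e * qcnj e) = 1" "qre e = 0"
    "(qre q)\<^sup>2 + (qre (q * qcnj e))\<^sup>2 \<le> nsq q"
    "nsq (of_real \<alpha> + of_real \<beta> * e) = \<alpha>\<^sup>2 + \<beta>\<^sup>2"
  using e_cases[OF assms] by (elim disjE; simp add: quat_eq_iff nsq_def qcnj_def)+


lemma eig_i_u:
  assumes ee: "e = Quat 0 1 0 0"
    and h1: "(1/2) *\<^sub>R (a + b) - (1/2) *\<^sub>R (c * qcnj e + d * e) = c0 *\<^sub>R x - ce *\<^sub>R y"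
    and h2: "(1/2) *\<^sub>R (c + d) + (1/2) *\<^sub>R (a * qcnj e + b * e) = c0 *\<^sub>R y + ce *\<^sub>R x"
  shows "a + c * e = (x + y * e) * (of_real c0 + of_real ce * e)"
  using h1 h2 unfolding ee
  by (clarsimp simp: quat_eq_iff qcnj_def algebra_simps; (intro conjI)?; linarith)

lemma eig_i_w:
  assumes ee: "e = Quat 0 1 0 0"
    and h1: "(1/2) *\<^sub>R (a + b) - (1/2) *\<^sub>R (c * qcnj e + d * e) = c0 *\<^sub>R x - ce *\<^sub>R y"
    and h2: "(1/2) *\<^sub>R (c + d) + (1/2) *\<^sub>R (a * qcnj e + b * e) = c0 *\<^sub>R y + ce *\<^sub>R x"
  shows "b - d * e = (x - y * e) * (of_real c0 - of_real ce * e)"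
  using h1 h2 unfolding ee
  by (clarsimp simp: quat_eq_iff qcnj_def algebra_simps; (intro conjI)?; linarith)

lemma eig_j_u:
  assumes ee: "e = Quat 0 0 1 0"
    and h1: "(1/2) *\<^sub>R (a + b) - (1/2) *\<^sub>R (c * qcnj e + d * e) = c0 *\<^sub>R x - ce *\<^sub>R y"
    and h2: "(1/2) *\<^sub>R (c + d) + (1/2) *\<^sub>R (a * qcnj e + b * e) = c0 *\<^sub>R y + ce *\<^sub>R x"
  shows "a + c * e = (x + y * e) * (of_real c0 + of_real ce * e)"
  using h1 h2 unfolding ee
  by (clarsimp simp: quat_eq_iff qcnj_def algebra_simps; (intro conjI)?; linarith)

lemma eig_j_w:
  assumes ee: "e = Quat 0 0 1 0"
    and h1: "(1/2) *\<^sub>R (a + b) - (1/2) *\<^sub>R (c * qcnj e + d * e) = c0 *\<^sub>R x - ce *\<^sub>R y"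
    and h2: "(1/2) *\<^sub>R (c + d) + (1/2) *\<^sub>R (a * qcnj e + b * e) = c0 *\<^sub>R y + ce *\<^sub>R x"
  shows "b - d * e = (x - y * e) * (of_real c0 - of_real ce * e)"
  using h1 h2 unfolding ee
  by (clarsimp simp: quat_eq_iff qcnj_def algebra_simps; (intro conjI)?; linarith)

lemma eig_k_u:
  assumes ee: "e = Quat 0 0 0 1"
    and h1: "(1/2) *\<^sub>R (a + b) - (1/2) *\<^sub>R (c * qcnj e + d * e) = c0 *\<^sub>R x - ce *\<^sub>R y"
    and h2: "(1/2) *\<^sub>R (c + d) + (1/2) *\<^sub>R (a * qcnj e + b * e) = c0 *\<^sub>R y + ce *\<^sub>R x"
  shows "a + c * e = (x + y * e) * (of_real c0 + of_real ce * e)"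
  using h1 h2 unfolding ee
  by (clarsimp simp: quat_eq_iff qcnj_def algebra_simps; (intro conjI)?; linarith)

lemma eig_k_w:
  assumes ee: "e = Quat 0 0 0 1"
    and h1: "(1/2) *\<^sub>R (a + b) - (1/2) *\<^sub>R (c * qcnj e + d * e) = c0 *\<^sub>R x - ce *\<^sub>R y"
    and h2: "(1/2) *\<^sub>R (c + d) + (1/2) *\<^sub>R (a * qcnj e + b * e) = c0 *\<^sub>R y + ce *\<^sub>R x"
  shows "b - d * e = (x - y * e) * (of_real c0 - of_real ce * e)"
  using h1 h2 unfolding ee
  by (clarsimp simp: quat_eq_iff qcnj_def algebra_simps; (intro conjI)?; linarith)

lemma eig_alg:
  assumes e: "is_e e"
    and h1: "(1/2) *\<^sub>R (a + b) - (1/2) *\<^sub>R (c * qcnj e + d * e) = c0 *\<^sub>R x - ce *\<^sub>R y"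
    and h2: "(1/2) *\<^sub>R (c + d) + (1/2) *\<^sub>R (a * qcnj e + b * e) = c0 *\<^sub>R y + ce *\<^sub>R x"
  shows "a + c * e = (x + y * e) * (of_real c0 + of_real ce * e)"
    "b - d * e = (x - y * e) * (of_real c0 - of_real ce * e)"
  using e_cases[OF e] eig_i_u[OF _ h1 h2] eig_j_u[OF _ h1 h2] eig_k_u[OF _ h1 h2]
    eig_i_w[OF _ h1 h2] eig_j_w[OF _ h1 h2] eig_k_w[OF _ h1 h2] by blast+


lemma mv_cong: "(\<And>j. j < n \<Longrightarrow> u j = u' j) \<Longrightarrow> mv n M u i = mv n M u' i"
  unfolding mv_def by (intro sum.cong) auto
lemma mhv_cong: "(\<And>j. j < n \<Longrightarrow> u j = u' j) \<Longrightarrow> mhv n M u i = mhv n M u' i"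
  unfolding mhv_def by (intro sum.cong) auto
lemma mv_right: "mv n M (\<lambda>j. u j * q) i = mv n M u i * q"
  unfolding mv_def by (simp add: sum_distrib_right mult.assoc)
lemma mhv_right: "mhv n M (\<lambda>j. u j * q) i = mhv n M u i * q"
  unfolding mhv_def by (simp add: sum_distrib_right mult.assoc)
lemma mv_add: "mv n M (\<lambda>j. u j + v j) i = mv n M u i + mv n M v i"
  unfolding mv_def by (simp add: distrib_left sum.distrib)
lemma mhv_diff: "mhv n M (\<lambda>j. u j - v j) i = mhv n M u i - mhv n M v i"
  unfolding mhv_def by (simp add: right_diff_distrib sum_subtractf)

lemma mv_mult: "mv n (qmat_mult n M N) u i = mv n M (mv n N u) i"
proof -
  have "mv n (qmat_mult n M N) u i = (\<Sum>j<n. (\<Sum>l<n. M i l * N l j) * u j)"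
    by (simp add: mv_def qmat_mult_def qsum_eq qmul_eq)
  also have "\<dots> = (\<Sum>j<n. \<Sum>l<n. M i l * (N l j * u j))"
    by (simp add: sum_distrib_right mult.assoc)
  also have "\<dots> = (\<Sum>l<n. \<Sum>j<n. M i l * (N l j * u j))" by (rule sum.swap)
  also have "\<dots> = mv n M (mv n N u) i" by (simp add: mv_def sum_distrib_left)
  finally show ?thesis .
qed

lemma mhv_mult: "mhv n (qmat_mult n M N) u i = mhv n N (mhv n M u) i"
proof -
  have "mhv n (qmat_mult n M N) u i = (\<Sum>j<n. qcnj (\<Sum>l<n. M j l * N l i) * u j)"
    by (simp add: mhv_def qmat_mult_def qsum_eq qmul_eq)
  also have "\<dots> = (\<Sum>j<n. \<Sum>l<n. qcnj (N l i) * (qcnj (M j l) * u j))"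
    by (simp add: qcnj_sum qcnj_mult sum_distrib_right mult.assoc)
  also have "\<dots> = (\<Sum>l<n. \<Sum>j<n. qcnj (N l i) * (qcnj (M j l) * u j))" by (rule sum.swap)
  also have "\<dots> = mhv n N (mhv n M u) i" by (simp add: mhv_def sum_distrib_left)
  finally show ?thesis .
qed

lemma qmat_id_ent: "qmat_id n i j = (if i = j then 1 else 0)"
  by (simp add: qmat_id_def one_quat_def qzero_eq)

lemma qcnj_01[simp]: "qcnj 1 = 1" "qcnj 0 = 0" by (simp_all add: quat_eq_iff)

lemma mv_id: "i < n \<Longrightarrow> mv n (qmat_id n) u i = u i"
proof -
  assume i: "i < n"
  have eq: "(\<lambda>j. qmat_id n i j * u j) = (\<lambda>j. if j = i then u j else 0)" by (auto simp: qmat_id_ent)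
  show ?thesis using i unfolding mv_def eq by simp
qed
lemma mhv_id: "i < n \<Longrightarrow> mhv n (qmat_id n) u i = u i"
proof -
  assume i: "i < n"
  have eq: "(\<lambda>j. qcnj (qmat_id n j i) * u j) = (\<lambda>j. if j = i then u j else 0)" by (auto simp: qmat_id_ent)
  show ?thesis using i unfolding mhv_def eq by simp
qed

lemma nil_eig_mv:
  assumes nil: "qmat_nilpotent n A" and eig: "\<And>i. i < n \<Longrightarrow> mv n A u i = u i * g"
    and i: "i < n" and ui: "u i \<noteq> 0"
  shows "g = 0"
proof -
  have pw: "\<forall>i<n. mv n (qmat_pow n A k) u i = u i * g ^ k" for k
  proof (induction k)
    case 0 then show ?case by (simp add: mv_id)
  next
    case (Suc k)
    show ?case
    proof (intro allI impI)
      fix i assume i: "i < n"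
      have "mv n (qmat_pow n A (Suc k)) u i = mv n (qmat_pow n A k) (mv n A u) i"
        by (simp add: mv_mult)
      also have "\<dots> = mv n (qmat_pow n A k) (\<lambda>j. u j * g) i" by (rule mv_cong) (simp add: eig)
      also have "\<dots> = u i * g ^ Suc k" using Suc i by (simp add: mv_right power_Suc2 mult.assoc del: power_Suc)
      finally show "mv n (qmat_pow n A (Suc k)) u i = u i * g ^ Suc k" .
    qed
  qed
  obtain k where k: "\<forall>i<n. \<forall>j<n. qmat_pow n A k i j = qzero" using nil unfolding qmat_nilpotent_def qzero_eq by blast
  have "mv n (qmat_pow n A k) u i = 0" using k i by (simp add: mv_def qzero_eq)
  then have "u i * g ^ k = 0" using pw i by simp
  then have "nsq (u i) * nsq g ^ k = 0" by (metis nsq_mult nsq_pow nsq_zero_iff)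
  then show ?thesis using ui by (simp add: nsq_zero_iff)
qed

lemma nil_eig_mhv:
  assumes nil: "qmat_nilpotent n A" and eig: "\<And>i. i < n \<Longrightarrow> mhv n A u i = u i * g"
    and i: "i < n" and ui: "u i \<noteq> 0"
  shows "g = 0"
proof -
  have pw: "\<forall>i<n. mhv n (qmat_pow n A k) u i = u i * g ^ k" for k
  proof (induction k)
    case 0 then show ?case by (simp add: mhv_id)
  next
    case (Suc k)
    show ?case
    proof (intro allI impI)
      fix i assume i: "i < n"
      have "mhv n (qmat_pow n A (Suc k)) u i = mhv n A (mhv n (qmat_pow n A k) u) i"
        by (simp add: mhv_mult)
      also have "\<dots> = mhv n A (\<lambda>j. u j * g ^ k) i" by (rule mhv_cong) (simp add: Suc)
      also have "\<dots> = u i * g ^ Suc k" using eig i by (simp add: mhv_right power_Suc mult.assoc)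
      finally show "mhv n (qmat_pow n A (Suc k)) u i = u i * g ^ Suc k" .
    qed
  qed
  obtain k where k: "\<forall>i<n. \<forall>j<n. qmat_pow n A k i j = qzero" using nil unfolding qmat_nilpotent_def qzero_eq by blast
  have "mhv n (qmat_pow n A k) u i = 0" using k i by (simp add: mhv_def qzero_eq)
  then have "u i * g ^ k = 0" using pw i by simp
  then have "nsq (u i) * nsq g ^ k = 0" by (metis nsq_mult nsq_pow nsq_zero_iff)
  then show ?thesis using ui by (simp add: nsq_zero_iff)
qed




lemma gam_facts:
  assumes "is_e e"
  shows "qre (of_real a + of_real b * e) = a" "qre ((of_real a + of_real b * e) * qcnj e) = b"
    "qre (of_real a - of_real b * e) = a" "qre ((of_real a - of_real b * e) * qcnj e) = - b"
  using e_cases[OF assms] by (elim disjE; simp add: of_real_def qcnj_def)+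

lemma comp_diff: "comp s (p - q) = comp s p - comp s q" by (simp add: comp_def)

lemma sum_delta_mult: "a < (m::nat) \<Longrightarrow> (\<Sum>b<m. (if a = b then K else 0) * f b) = (K * f a :: real)"
proof -
  assume a: "a < m"
  have eq: "(\<lambda>b. (if a = b then K else 0) * f b) = (\<lambda>b. if b = a then K * f b else 0)" by auto
  show ?thesis unfolding eq using a by (subst sum.delta) auto
qed

lemma qnorm_nsq: "qnorm q = sqrt (nsq q)" by (simp add: qnorm_def nsq_def)

lemma sumsq_cv: "(\<Sum>a<4*n. (cv x a)\<^sup>2) = (\<Sum>i<n. nsq (x i))"
  using sumsq_qv[where n=n and \<xi>="cv x"] by simp

lemma re_scale_e: "qre (of_real a * q) = a * qre q" by (simp add: of_real_def)




lemma kern_step: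
  assumes r: "r \<ge> 0" and W: "qnumrange n A = qdisk c r" and e: "is_e e"
  shows "\<exists>\<xi>. (\<exists>a<4*n. \<xi> a \<noteq> 0) \<and> (\<forall>a<4*n. (\<Sum>b<4*n.
      ((if a = b then qre c * (1 - u\<^sup>2) + 2 * u * qre (c * qcnj e) + r * (1 + u\<^sup>2) else 0)
       - (1 - u\<^sup>2) * pm A a b - 2 * u * qm A e a b) * \<xi> b) = 0)"
proof -
  define m where "m = 4*n"
  define c0 where "c0 = qre c"
  define ce where "ce = qre (c * qcnj e)"
  define lam where "lam = c0 * (1 - u\<^sup>2) + 2 * u * ce + r * (1 + u\<^sup>2)"
  define T where "T a b = (if a = b then lam else 0) - (1 - u\<^sup>2) * pm A a b - 2 * u * qm A e a b" for a b
  have Tsym: "T a b = T b a" for a b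
    by (cases "a = b") (simp_all add: T_def pm_sym[of A a b] qm_sym[of A e a b])
  have inW: "x \<in> qsphere n \<Longrightarrow> FF n A x \<in> qdisk c r" for x using W unfolding numrange_eq by blast
  have fromW: "w \<in> qdisk c r \<Longrightarrow> \<exists>x\<in>qsphere n. FF n A x = w" for w using W unfolding numrange_eq by (metis imageE)
  have row: "(\<Sum>b<m. T a b * z b) = lam * z a - (1 - u\<^sup>2) * (\<Sum>b<m. pm A a b * z b) - 2 * u * (\<Sum>b<m. qm A e a b * z b)"
    if a: "a < m" for a z
  proof -
    have "(\<Sum>b<m. T a b * z b) = (\<Sum>b<m. (if a = b then lam else 0) * z b) - (\<Sum>b<m. (1 - u\<^sup>2) * (pm A a b * z b))
       - (\<Sum>b<m. 2 * u * (qm A e a b * z b))"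
      unfolding T_def by (simp add: left_diff_distrib sum_subtractf mult.assoc)
    then show ?thesis using a by (simp add: sum_delta_mult sum_distrib_left[symmetric])
  qed
  have QFT: "QF m T z = lam * (\<Sum>a<m. (z a)\<^sup>2) - (1 - u\<^sup>2) * qre (FF n A (qv z)) - 2 * u * qre (FF n A (qv z) * qcnj e)" for z
  proof -
    have "QF m T z = (\<Sum>a<m. lam * (z a)\<^sup>2 - (1 - u\<^sup>2) * (z a * (\<Sum>b<m. pm A a b * z b)) - 2 * u * (z a * (\<Sum>b<m. qm A e a b * z b)))"
      unfolding QF_def
    proof (intro sum.cong refl)
      fix a assume "a \<in> {..<m}"
      then have a: "a < m" by simp
      show "z a * (\<Sum>b<m. T a b * z b) = lam * (z a)\<^sup>2 - (1 - u\<^sup>2) * (z a * (\<Sum>b<m. pm A a b * z b)) - 2 * u * (z a * (\<Sum>b<m. qm A e a b * z b))"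
        unfolding row[OF a] by (simp add: power2_eq_square right_diff_distrib mult.left_commute)
    qed
    also have "\<dots> = lam * (\<Sum>a<m. (z a)\<^sup>2) - (1 - u\<^sup>2) * (\<Sum>a<m. z a * (\<Sum>b<m. pm A a b * z b)) - 2 * u * (\<Sum>a<m. z a * (\<Sum>b<m. qm A e a b * z b))"
      by (simp add: sum_subtractf sum_distrib_left)
    also have "\<dots> = lam * (\<Sum>a<m. (z a)\<^sup>2) - (1 - u\<^sup>2) * qre (FF n A (qv z)) - 2 * u * qre (FF n A (qv z) * qcnj e)"
      unfolding m_def pm_form qm_form ..
    finally show ?thesis .
  qed
  have psd: "0 \<le> QF m T z" for z
  proof (cases "(\<Sum>a<m. (z a)\<^sup>2) = 0")
    case True
    then have "\<forall>a\<in>{..<m}. (z a)\<^sup>2 = 0" by (subst (asm) sum_nonneg_eq_0_iff) auto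
    then show ?thesis unfolding QF_def by simp
  next
    case False
    define N where "N = (\<Sum>a<m. (z a)\<^sup>2)"
    have Np: "N > 0" using False unfolding N_def by (simp add: sum_nonneg order.not_eq_order_implies_strict)
    define s where "s = 1 / sqrt N"
    define z' where "z' a = s * z a" for a
    have s2: "s\<^sup>2 * N = 1" unfolding s_def using Np by (simp add: power_divide)
    have "(\<Sum>a<m. (z' a)\<^sup>2) = s\<^sup>2 * N" unfolding z'_def N_def by (simp add: power_mult_distrib sum_distrib_left)
    then have z'1: "(\<Sum>a<m. (z' a)\<^sup>2) = 1" using s2 by simp
    let ?x = "qv z'"
    let ?w = "FF n A ?x"
    have "?x \<in> qsphere n" unfolding sphere_iff using z'1 sumsq_qv[where n=n and \<xi>=z'] m_def by simp
    then have "?w \<in> qdisk c r" by (rule inW)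
    then have "qnorm (?w - c) \<le> r" unfolding qdisk_def by (simp add: qsub_eq)
    then have "nsq (?w - c) \<le> r\<^sup>2" unfolding qnorm_nsq
    proof -
      have nn: "nsq (?w - c) \<ge> 0" by (simp add: nsq_def)
      have "nsq (?w - c) = (sqrt (nsq (?w - c)))\<^sup>2" using nn by simp
      also have "\<dots> \<le> r\<^sup>2" using \<open>qnorm (?w - c) \<le> r\<close> nn unfolding qnorm_nsq by (intro power_mono) auto
      finally show ?thesis .
    qed
    then have XY: "(qre ?w - c0)\<^sup>2 + (qre (?w * qcnj e) - ce)\<^sup>2 \<le> r\<^sup>2"
      using e_facts(5)[OF e, of "?w - c"] unfolding c0_def ce_def by (simp add: left_diff_distrib)
    have "(1 - u\<^sup>2) * (qre ?w - c0) + 2 * u * (qre (?w * qcnj e) - ce) \<le> r * (1 + u\<^sup>2)"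
      by (rule cs2[OF XY r])
    then have "0 \<le> QF m T z'" unfolding QFT z'1 lam_def by (simp add: algebra_simps)
    moreover have "QF m T z' = s\<^sup>2 * QF m T z" unfolding z'_def by (rule QF_scale)
    moreover have "s\<^sup>2 > 0" unfolding s_def using Np by simp
    ultimately show ?thesis by (simp add: zero_le_mult_iff)
  qed
  have attain: "\<exists>\<xi>. (\<exists>a<m. \<xi> a \<noteq> 0) \<and> QF m T \<xi> = 0"
  proof -
    have D: "1 + u\<^sup>2 \<noteq> 0" using zero_le_power2[of u] by linarith
    define \<alpha> where "\<alpha> = r * (1 - u\<^sup>2) / (1 + u\<^sup>2)"
    define \<beta> where "\<beta> = r * (2 * u) / (1 + u\<^sup>2)"
    define w where "w = c + of_real \<alpha> + of_real \<beta> * e"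
    have idd: "(1 - u\<^sup>2)\<^sup>2 + (2 * u)\<^sup>2 = (1 + u\<^sup>2)\<^sup>2" by (simp add: power2_eq_square algebra_simps)
    have ab: "\<alpha>\<^sup>2 + \<beta>\<^sup>2 = r\<^sup>2"
    proof -
      have "\<alpha>\<^sup>2 + \<beta>\<^sup>2 = r\<^sup>2 * ((1 - u\<^sup>2)\<^sup>2 + (2 * u)\<^sup>2) / (1 + u\<^sup>2)\<^sup>2"
        unfolding \<alpha>_def \<beta>_def by (simp add: power_divide power_mult_distrib add_divide_distrib distrib_left)
      also have "\<dots> = r\<^sup>2" unfolding idd using D by simp
      finally show ?thesis .
    qed

    have ab2: "(1 - u\<^sup>2) * \<alpha> + 2 * u * \<beta> = r * (1 + u\<^sup>2)"
    proof -
      have "(1 - u\<^sup>2) * \<alpha> + 2 * u * \<beta> = r * ((1 - u\<^sup>2)\<^sup>2 + (2 * u)\<^sup>2) / (1 + u\<^sup>2)"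
        unfolding \<alpha>_def \<beta>_def by (simp add: power2_eq_square add_divide_distrib distrib_left mult.left_commute)
      also have "\<dots> = r * (1 + u\<^sup>2)" unfolding idd using D by (simp add: power2_eq_square)
      finally show ?thesis .
    qed

    have "w - c = of_real \<alpha> + of_real \<beta> * e" unfolding w_def by simp
    then have "nsq (w - c) = r\<^sup>2" using e_facts(6)[OF e] ab by simp
    then have "qnorm (w - c) = r" unfolding qnorm_nsq using r by simp
    then have "w \<in> qdisk c r" unfolding qdisk_def by (simp add: qsub_eq)
    then obtain x where xs: "x \<in> qsphere n" and xw: "FF n A x = w" using fromW by blast
    define \<xi> where "\<xi> = cv x"
    have qx: "qv \<xi> = x" unfolding \<xi>_def by simp
    have s1: "(\<Sum>a<m. (\<xi> a)\<^sup>2) = 1" unfolding \<xi>_def m_def sumsq_cv using xs sphere_iff by simp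
    have nz: "\<exists>a<m. \<xi> a \<noteq> 0"
    proof (rule ccontr)
      assume "\<not> ?thesis"
      then have "(\<Sum>a<m. (\<xi> a)\<^sup>2) = 0" by simp
      with s1 show False by simp
    qed
    have w1: "qre w = c0 + \<alpha>" unfolding w_def c0_def using e_facts(4)[OF e] by (simp add: re_scale_e)
    have w2: "qre (w * qcnj e) = ce + \<beta>" unfolding w_def ce_def using e_facts(3,4)[OF e]
      by (simp add: distrib_right mult.assoc re_scale_e)
    have "QF m T \<xi> = 0" unfolding QFT qx s1 xw w1 w2 lam_def using ab2 by (simp add: algebra_simps)
    with nz show ?thesis by blast
  qed
  then obtain \<xi> where nz: "\<exists>a<m. \<xi> a \<noteq> 0" and q0: "QF m T \<xi> = 0" by blast
  have "\<forall>a<m. (\<Sum>b<m. T a b * \<xi> b) = 0"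
    using psd_kernel[of m T, OF _ psd q0] Tsym by blast
  then have "\<forall>a<4*n. (\<Sum>b<4*n. ((if a = b then lam else 0) - (1 - u\<^sup>2) * pm A a b - 2 * u * qm A e a b) * \<xi> b) = 0"
    unfolding m_def T_def .
  then show ?thesis using nz unfolding m_def lam_def c0_def ce_def by blast
qed




lemma xy_zero:
  assumes e: "is_e e" and h1: "x + y * e = 0" and h2: "x - y * e = 0"
  shows "x = 0 \<and> y = 0"
  using e_cases[OF e] h1 h2
  by (elim disjE; clarsimp simp: quat_eq_iff; (intro conjI)?; linarith)

lemma center_e:
  assumes nil: "qmat_nilpotent n A" and r: "r \<ge> 0" and W: "qnumrange n A = qdisk c r" and e: "is_e e"
  shows "qre c = 0 \<and> qre (c * qcnj e) = 0"
proof -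
  define m where "m = 4*n"
  define c0 where "c0 = qre c"
  define ce where "ce = qre (c * qcnj e)"
  define k0 where "k0 a b = (if a = b then c0 + r else 0) - pm A a b" for a b
  define k1 where "k1 a b = (if a = b then 2 * ce else 0) - 2 * qm A e a b" for a b
  define k2 where "k2 a b = (if a = b then r - c0 else 0) + pm A a b" for a b
  have H: "\<exists>\<xi>. (\<exists>a<m. \<xi> a \<noteq> 0) \<and> (\<forall>a<m. (\<Sum>b<m. (k0 a b + u * k1 a b + u\<^sup>2 * k2 a b) * \<xi> b) = 0)" for u
  proof -
    obtain \<xi> where nz: "\<exists>a<m. \<xi> a \<noteq> 0" and k: "\<forall>a<m. (\<Sum>b<m.
      ((if a = b then qre c * (1 - u\<^sup>2) + 2 * u * qre (c * qcnj e) + r * (1 + u\<^sup>2) else 0)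
       - (1 - u\<^sup>2) * pm A a b - 2 * u * qm A e a b) * \<xi> b) = 0"
      using kern_step[OF r W e, of u] unfolding m_def by blast
    have eq: "k0 a b + u * k1 a b + u\<^sup>2 * k2 a b = (if a = b then qre c * (1 - u\<^sup>2) + 2 * u * qre (c * qcnj e) + r * (1 + u\<^sup>2) else 0)
       - (1 - u\<^sup>2) * pm A a b - 2 * u * qm A e a b" for a b
      unfolding k0_def k1_def k2_def c0_def ce_def by (cases "a = b") (simp_all add: algebra_simps)
    show ?thesis using nz k unfolding eq by blast
  qed
  obtain v where vnz: "\<exists>a<m. v a \<noteq> 0"
    and vk: "\<forall>a<m. (\<Sum>b<m. (of_real (k0 a b) + \<i> * of_real (k1 a b) - of_real (k2 a b)) * v b) = 0"
    using poly_det_step[OF H] by blast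
  define \<xi> where "\<xi> b = Re (v b)" for b
  define \<eta> where "\<eta> b = Im (v b)" for b
  have R: "c0 * \<xi> a - ce * \<eta> a = (\<Sum>b<m. pm A a b * \<xi> b) - (\<Sum>b<m. qm A e a b * \<eta> b)
     \<and> c0 * \<eta> a + ce * \<xi> a = (\<Sum>b<m. pm A a b * \<eta> b) + (\<Sum>b<m. qm A e a b * \<xi> b)" if a: "a < m" for a
  proof -
    let ?S = "\<Sum>b<m. (of_real (k0 a b) + \<i> * of_real (k1 a b) - of_real (k2 a b)) * v b"
    have S0: "?S = 0" using vk a by blast
    have "Re ?S = (\<Sum>b<m. (if a = b then 2 * c0 else 0) * \<xi> b - 2 * (pm A a b * \<xi> b)
        - (if a = b then 2 * ce else 0) * \<eta> b + 2 * (qm A e a b * \<eta> b))"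
      unfolding Re_sum by (intro sum.cong refl) (simp add: k0_def k1_def k2_def \<xi>_def \<eta>_def algebra_simps)
    also have "\<dots> = 2 * c0 * \<xi> a - 2 * (\<Sum>b<m. pm A a b * \<xi> b) - 2 * ce * \<eta> a + 2 * (\<Sum>b<m. qm A e a b * \<eta> b)"
      using a by (simp add: sum.distrib sum_subtractf sum_distrib_left sum_delta_mult)
    finally have 1: "2 * c0 * \<xi> a - 2 * (\<Sum>b<m. pm A a b * \<xi> b) - 2 * ce * \<eta> a + 2 * (\<Sum>b<m. qm A e a b * \<eta> b) = 0"
      using S0 by simp
    have "Im ?S = (\<Sum>b<m. (if a = b then 2 * c0 else 0) * \<eta> b - 2 * (pm A a b * \<eta> b)
        + (if a = b then 2 * ce else 0) * \<xi> b - 2 * (qm A e a b * \<xi> b))"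
      unfolding Im_sum by (intro sum.cong refl) (simp add: k0_def k1_def k2_def \<xi>_def \<eta>_def algebra_simps)
    also have "\<dots> = 2 * c0 * \<eta> a - 2 * (\<Sum>b<m. pm A a b * \<eta> b) + 2 * ce * \<xi> a - 2 * (\<Sum>b<m. qm A e a b * \<xi> b)"
      using a by (simp add: sum.distrib sum_subtractf sum_distrib_left sum_delta_mult)
    finally have 2: "2 * c0 * \<eta> a - 2 * (\<Sum>b<m. pm A a b * \<eta> b) + 2 * ce * \<xi> a - 2 * (\<Sum>b<m. qm A e a b * \<xi> b) = 0"
      using S0 by simp
    from 1 2 show ?thesis by linarith
  qed
  define x where "x = qv \<xi>"
  define y where "y = qv \<eta>"
  have ai: "4 * i + s < m" "(4 * i + s) div 4 = i" "(4 * i + s) mod 4 = s" if "i < n" "s < 4" for i s :: nat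
    using that unfolding m_def by auto
  have E1: "(1/2) *\<^sub>R (mv n A x i + mhv n A x i) - (1/2) *\<^sub>R (mv n A y i * qcnj e + mhv n A y i * e) = c0 *\<^sub>R x i - ce *\<^sub>R y i"
    if i: "i < n" for i
  proof (rule comp_ext)
    fix s :: nat assume s: "s < 4"
    have p: "(\<Sum>b<m. pm A (4*i+s) b * \<xi> b) = comp s ((1/2) *\<^sub>R (mv n A x i + mhv n A x i))"
      unfolding m_def pm_row x_def using ai[OF i s] by simp
    have q: "(\<Sum>b<m. qm A e (4*i+s) b * \<eta> b) = comp s ((1/2) *\<^sub>R (mv n A y i * qcnj e + mhv n A y i * e))"
      unfolding m_def qm_row y_def using ai[OF i s] by (simp add: mv_right)
    show "comp s ((1/2) *\<^sub>R (mv n A x i + mhv n A x i) - (1/2) *\<^sub>R (mv n A y i * qcnj e + mhv n A y i * e))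
       = comp s (c0 *\<^sub>R x i - ce *\<^sub>R y i)"
      using R[OF ai(1)[OF i s]] p q s unfolding comp_diff comp_scale x_def y_def comp_qv[OF s] by linarith
  qed
  have E2: "(1/2) *\<^sub>R (mv n A y i + mhv n A y i) + (1/2) *\<^sub>R (mv n A x i * qcnj e + mhv n A x i * e) = c0 *\<^sub>R y i + ce *\<^sub>R x i"
    if i: "i < n" for i
  proof (rule comp_ext)
    fix s :: nat assume s: "s < 4"
    have p: "(\<Sum>b<m. pm A (4*i+s) b * \<eta> b) = comp s ((1/2) *\<^sub>R (mv n A y i + mhv n A y i))"
      unfolding m_def pm_row y_def using ai[OF i s] by simp
    have q: "(\<Sum>b<m. qm A e (4*i+s) b * \<xi> b) = comp s ((1/2) *\<^sub>R (mv n A x i * qcnj e + mhv n A x i * e))"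
      unfolding m_def qm_row x_def using ai[OF i s] by (simp add: mv_right)
    show "comp s ((1/2) *\<^sub>R (mv n A y i + mhv n A y i) + (1/2) *\<^sub>R (mv n A x i * qcnj e + mhv n A x i * e))
       = comp s (c0 *\<^sub>R y i + ce *\<^sub>R x i)"
      using R[OF ai(1)[OF i s]] p q s unfolding comp_add comp_scale x_def y_def comp_qv[OF s] by linarith
  qed
  define g where "g = (of_real c0 + of_real ce * e :: quat)"
  define g' where "g' = (of_real c0 - of_real ce * e :: quat)"
  define uu where "uu j = x j + y j * e" for j
  define ww where "ww j = x j - y j * e" for j
  have eigU: "mv n A uu i = uu i * g" if "i < n" for i
    unfolding uu_def mv_add mv_right g_def using eig_alg(1)[OF e E1[OF that] E2[OF that]] .
  have eigW: "mhv n A ww i = ww i * g'" if "i < n" for i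
    unfolding ww_def mhv_diff mhv_right g'_def using eig_alg(2)[OF e E1[OF that] E2[OF that]] .
  obtain a0 where a0: "a0 < m" and va: "v a0 \<noteq> 0" using vnz by blast
  define i0 where "i0 = a0 div 4"
  define s0 where "s0 = a0 mod 4"
  have i0: "i0 < n" using a0 unfolding i0_def m_def by simp
  have s0: "s0 < 4" unfolding s0_def by simp
  have a0eq: "a0 = 4 * i0 + s0" unfolding i0_def s0_def by simp
  have "\<xi> a0 \<noteq> 0 \<or> \<eta> a0 \<noteq> 0" using va unfolding \<xi>_def \<eta>_def by (auto simp: complex_eq_iff)
  moreover have cx: "comp s0 (x i0) = \<xi> a0" unfolding x_def a0eq by (rule comp_qv[OF s0])
  moreover have cy: "comp s0 (y i0) = \<eta> a0" unfolding y_def a0eq by (rule comp_qv[OF s0])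
  moreover have c0z: "comp s0 0 = 0" by (simp add: comp_def)
  ultimately have "x i0 \<noteq> 0 \<or> y i0 \<noteq> 0" by auto
  then have "uu i0 \<noteq> 0 \<or> ww i0 \<noteq> 0" using xy_zero[OF e] unfolding uu_def ww_def by blast
  then have "g = 0 \<or> g' = 0"
    using nil_eig_mv[OF nil eigU i0] nil_eig_mhv[OF nil eigW i0] by blast
  then show ?thesis
  proof
    assume "g = 0"
    have h: "qre g = c0" "qre (g * qcnj e) = ce" unfolding g_def by (rule gam_facts[OF e])+
    with \<open>g = 0\<close> have "c0 = 0" "ce = 0" by simp_all
    then show ?thesis unfolding c0_def ce_def by simp
  next
    assume "g' = 0"
    have h: "qre g' = c0" "qre (g' * qcnj e) = - ce" unfolding g'_def by (rule gam_facts[OF e])+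
    with \<open>g' = 0\<close> have "c0 = 0" "ce = 0" by simp_all
    then show ?thesis unfolding c0_def ce_def by simp
  qed
qed



theorem theorem3p1:
  fixes n :: nat and A :: qmat and c :: quat and r :: real
  assumes "qmat_nilpotent n A"
    and "r \<ge> 0"
    and "qnumrange n A = qdisk c r"
  shows "c = qzero \<and> qnumrange n A = qdisk qzero r"
proof -
  have e1: "is_e (un 1)" "is_e (un 2)" "is_e (un 3)" by (simp_all add: is_e_def)
  have h1: "qre c = 0 \<and> qre (c * qcnj (un 1)) = 0" by (rule center_e[OF assms e1(1)])
  have h2: "qre (c * qcnj (un 2)) = 0" using center_e[OF assms e1(2)] by blast
  have h3: "qre (c * qcnj (un 3)) = 0" using center_e[OF assms e1(3)] by blast
  have "c = qzero" using h1 h2 h3 by (simp add: un_def qcnj_def quat_eq_iff qzero_def)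
  with assms(3) show ?thesis by simp
qed

end
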